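(* Let $k\geq 3$ be an integer and let $m$ be an odd positive integer such that $m\notin\mathcal F(k)$. Then $k-1\geq 2^{\delta(m)}$, where $\delta(m)=\lceil\log_2(m/3)\rceil$.
   Context: The Thue–Morse word is $\mathbf t=\mathbf t_1\mathbf t_2\cdots$ where $\mathbf t_i\in\{0,1\}$ has the parity of the number of $1$'s in the binary expansion of $i-1$. For positive integers $\alpha\le\beta$, write $\langle\alpha,\beta\rangle=\mathbf t_\alpha\mathbf t_{\alpha+1}\cdots\mathbf t_\beta$. A $k$-anti-power is a word $w_1w_2\cdots w_k$ where $w_1,\dots,w_k$ are pairwise distinct words all of the same length. $\mathcal F(k)$ is the set of odd positive integers $m$ such that the prefix $\langle 1,km\rangle$ of $\mathbf t$ is a $k$-anti-power, i.e. such that the blocks $\langle nm+1,(n+1)m\rangle$, $0\le n\le k-1$, are pairwise distinct. *)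

theory Defs
  imports Complex_Main
begin

fun bin_ones :: "nat \<Rightarrow> nat" where
  "bin_ones n = (if n = 0 then 0 else n mod 2 + bin_ones (n div 2))"

(* Thue-Morse word, 1-indexed: t_i = parity of the number of 1's in binary expansion of i-1 *)
definition thue_morse :: "nat \<Rightarrow> nat" where
  "thue_morse i = bin_ones (i - 1) mod 2"

definition tm_factor :: "nat \<Rightarrow> nat \<Rightarrow> nat list" where
  "tm_factor \<alpha> \<beta> = map thue_morse [\<alpha>..<\<beta> + 1]"

definition F_set :: "nat \<Rightarrow> nat set" where
  "F_set k = {m. odd m \<and> 0 < m \<and>
     (\<forall>n1 < k. \<forall>n2 < k. n1 \<noteq> n2 \<longrightarrow>
        tm_factor (n1 * m + 1) ((n1 + 1) * m) \<noteq> tm_factor (n2 * m + 1) ((n2 + 1) * m))}"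

definition tm_delta :: "nat \<Rightarrow> int" where
  "tm_delta m = \<lceil>log 2 (real m / 3)\<rceil>"

end

theory Submission
  imports Defs
begin

declare bin_ones.simps[simp del]

lemma bin_ones_0[simp]: "bin_ones 0 = 0"
  by (subst bin_ones.simps) simp

definition T :: "nat \<Rightarrow> nat" where "T i = bin_ones i mod 2"

lemma bin_ones_double: "bin_ones (2*i) = bin_ones i"
  by (subst bin_ones.simps) auto

lemma bin_ones_double1: "bin_ones (2*i+1) = bin_ones i + 1"
  by (subst bin_ones.simps) auto

lemma T_double: "T (2*i) = T i"
  by (simp add: T_def bin_ones_double)

lemma mod2_suc: "((n::nat)+1) mod 2 = 1 - n mod 2"
  by presburger

lemma T_double1: "T (2*i+1) = 1 - T i"
  unfolding T_def bin_ones_double1 by (rule mod2_suc)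

lemma T_bin: "T i = 0 \<or> T i = 1"
  unfolding T_def by auto

lemma neq_trans: "T x \<noteq> T y \<Longrightarrow> T y \<noteq> T z \<Longrightarrow> T x = T z"
  using T_bin[of x] T_bin[of y] T_bin[of z] by auto

lemma T_neq: "T (2*i) \<noteq> T (2*i+1)"
  unfolding T_double T_double1 using T_bin[of i] by auto

lemma no_three: "\<not> (T r = T (r+1) \<and> T (r+1) = T (r+2))"
proof (cases "even r")
  case True
  then obtain s where "r = 2*s" by blast
  then show ?thesis using T_neq[of s] by auto
next
  case False
  then obtain s where "r = 2*s+1" using oddE by blast
  then have "r+1 = 2*(s+1)" "r+2 = 2*(s+1)+1" by auto
  then show ?thesis using T_neq[of "s+1"] by metis
qed

lemma even_neq: "even x \<Longrightarrow> T x \<noteq> T (x+1)"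
  using T_neq by (metis evenE)

lemma no_alt4:
  assumes "odd q" and "T q \<noteq> T (q+1)" "T (q+1) \<noteq> T (q+2)" "T (q+2) \<noteq> T (q+3)"
  shows False
proof -
  obtain r where r: "q = 2*r+1" using assms(1) oddE by blast
  have a: "T (2*r) \<noteq> T q" using T_neq r by simp
  have q4: "q+4 = (q+3)+1" by simp
  have b: "T (q+3) \<noteq> T (q+4)" unfolding q4 using even_neq[of "q+3"] assms(1) by simp
  have "T (2*r) = T (q+1)" using neq_trans[OF a assms(2)] .
  moreover have "T (q+1) = T (q+3)" using neq_trans[OF assms(3,4)] .
  moreover have "q+1 = 2*(r+1)" "q+3 = 2*(r+2)" using r by auto
  ultimately show False using no_three[of r] T_double[of r] T_double[of "r+1"] T_double[of "r+2"] by simp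
qed

lemma base:
  assumes "odd d" and agree: "\<forall>j<4. T (p+j) = T (p+j+d)"
  shows False
proof -
  have step: "T (p+j) \<noteq> T (p+j+1) \<and> T (p+d+j) \<noteq> T (p+d+j+1)" if "j < 3" for j
  proof -
    have e1: "T (p+j) = T (p+d+j)" using agree that by (simp add: add.commute add.left_commute)
    have e2: "T (p+j+1) = T (p+d+j+1)" using agree[rule_format, of "j+1"] that
      by (simp add: add.commute add.left_commute)
    have "T (p+j) \<noteq> T (p+j+1) \<or> T (p+d+j) \<noteq> T (p+d+j+1)"
    proof (cases "even (p+j)")
      case True then show ?thesis using even_neq by blast
    next
      case False then have "even (p+d+j)" using assms(1) by presburger
      then show ?thesis using even_neq by blast
    qed
    then show ?thesis using e1 e2 by auto
  qed
  have two3: "2 < (3::nat)" by simp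
  show False
  proof (cases "odd p")
    case True
    have s0: "T p \<noteq> T (p+1)" using step[of 0] by simp
    have s1: "T (p+1) \<noteq> T (p+2)" using step[of 1] by (simp add: add.assoc)
    have e3: "p+2+1 = p+3" by simp
    have s2: "T (p+2) \<noteq> T (p+3)" using step[OF two3] e3 by metis
    show False using no_alt4[OF True s0 s1 s2] .
  next
    case False
    then have o: "odd (p+d)" using assms(1) by simp
    have s0: "T (p+d) \<noteq> T (p+d+1)" using step[of 0] by simp
    have s1: "T (p+d+1) \<noteq> T (p+d+2)" using step[of 1] by (simp add: add.assoc)
    have e3: "p+d+2+1 = p+d+3" by simp
    have s2: "T (p+d+2) \<noteq> T (p+d+3)" using step[OF two3] e3 by metis
    show False using no_alt4[OF o s0 s1 s2] .
  qed
qed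

lemma run_bound:
  "odd c \<Longrightarrow> \<not> (\<forall>j < 3*2^e+1. T (p+j) = T (p+j+2^e*c))"
proof (induction e arbitrary: p)
  case 0
  then show ?case using base[of c p] by auto
next
  case (Suc e)
  show ?case
  proof
  assume h: "\<forall>j < 3*2^Suc e+1. T (p+j) = T (p+j+2^Suc e*c)"
  have "\<forall>j < 3*2^e+1. T (p div 2+j) = T (p div 2+j+2^e*c)"
  proof (intro allI impI)
    fix j :: nat assume j: "j < 3*2^e+1"
    have "2*j < 3*2^Suc e+1" using j by simp
    then have eq: "T (p+2*j) = T (p+2*j+2^Suc e*c)" using h by blast
    show "T (p div 2+j) = T (p div 2+j+2^e*c)"
    proof (cases "even p")
      case True
      then obtain s where s: "p = 2*s" by blast
      have A: "p+2*j = 2*(s+j)" "p+2*j+2^Suc e*c = 2*(s+j+2^e*c)" using s by auto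
      have B1: "T (p+2*j) = T (s+j)" by (simp only: A(1) T_double)
      have B2: "T (p+2*j+2^Suc e*c) = T (s+j+2^e*c)" by (simp only: A(2) T_double)
      have "T (s+j) = T (s+j+2^e*c)" using eq B1 B2 by simp
      then show ?thesis using s by simp
    next
      case False
      then obtain s where s: "p = 2*s+1" using oddE by blast
      have "p+2*j = 2*(s+j)+1" "p+2*j+2^Suc e*c = 2*(s+j+2^e*c)+1" using s by auto
      then have "1 - T (s+j) = 1 - T (s+j+2^e*c)" using eq T_double1 by metis
      then have "T (s+j) = T (s+j+2^e*c)" using T_bin[of "s+j"] T_bin[of "s+j+2^e*c"] by auto
      then show ?thesis using s by simp
    qed
  qed
  then show False using Suc.IH Suc.prems by blast
qed
qed

lemma two_adic: "(n::nat) > 0 \<Longrightarrow> \<exists>e c. n = 2^e*c \<and> odd c"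
proof (induction n rule: less_induct)
  case (less n)
  show ?case
  proof (cases "odd n")
    case True then show ?thesis by (rule_tac x=0 in exI) auto
  next
    case False
    then obtain h where h: "n = 2*h" by blast
    then have "h < n" "h > 0" using less.prems by auto
    then obtain e c where "h = 2^e*c" "odd c" using less.IH by blast
    then show ?thesis using h by (rule_tac x="Suc e" in exI) auto
  qed
qed

lemma factor_nth:
  assumes "j < m"
  shows "tm_factor (n*m+1) ((n+1)*m) ! j = T (n*m+j)"
proof -
  have u: "(n+1)*m+1 = (n*m+1)+m" by simp
  show ?thesis unfolding tm_factor_def u using assms
    by (simp add: nth_map thue_morse_def T_def del: upt_Suc)
qed

lemma main_bound:
  assumes "odd m" "a < b"
    and eq: "tm_factor (a*m+1) ((a+1)*m) = tm_factor (b*m+1) ((b+1)*m)"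
    and "b - a = 2^e*c" "odd c"
  shows "m \<le> 3*2^e \<and> 2^e \<le> b"
proof -
  have agree: "T (a*m+j) = T (a*m+j+2^e*(c*m))" if "j < m" for j
  proof -
    have "T (a*m+j) = T (b*m+j)" using factor_nth[OF that, of a] factor_nth[OF that, of b] eq by simp
    moreover have "b*m = a*m + (b-a)*m" using assms(2) by (simp add: algebra_simps)
    ultimately show ?thesis using \<open>b - a = 2^e*c\<close> by (simp add: algebra_simps)
  qed
  have oc: "odd (c*m)" using \<open>odd c\<close> assms(1) by simp
  have "m \<le> 3*2^e"
  proof (rule ccontr)
    assume "\<not> m \<le> 3*2^e"
    then have "\<forall>j < 3*2^e+1. T (a*m+j) = T (a*m+j+2^e*(c*m))" using agree by auto
    then show False using run_bound[OF oc] by blast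
  qed
  moreover have "2^e \<le> b"
  proof -
    have "c \<ge> 1" using \<open>odd c\<close> by (cases c) auto
    then have "2^e \<le> (2::nat)^e*c" by simp
    then show ?thesis using \<open>b - a = 2^e*c\<close> by linarith
  qed
  ultimately show ?thesis by simp
qed

theorem corollary1:
  fixes k m :: nat
  assumes "k \<ge> 3" and "odd m" and "0 < m" and "m \<notin> F_set k"
  shows "real k - 1 \<ge> 2 powr (real_of_int (tm_delta m))"
proof -
  obtain n1 n2 where n: "n1 < k" "n2 < k" "n1 \<noteq> n2"
    and eq: "tm_factor (n1 * m + 1) ((n1 + 1) * m) = tm_factor (n2 * m + 1) ((n2 + 1) * m)"
    using assms unfolding F_set_def by blast
  obtain a b where ab: "a < b" "b < k"
    and eq2: "tm_factor (a*m+1) ((a+1)*m) = tm_factor (b*m+1) ((b+1)*m)"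
  proof (cases "n1 < n2")
    case True then show ?thesis using that n eq by blast
  next
    case False then have "n2 < n1" using n by simp
    show ?thesis using that[OF \<open>n2 < n1\<close> n(1) eq[symmetric]] by blast
  qed
  obtain e c where ec: "b - a = 2^e*c" "odd c" using two_adic[of "b-a"] ab by auto
  have mb: "m \<le> 3*2^e" "2^e \<le> b" using main_bound[OF assms(2) ab(1) eq2 ec] by auto
  have "real m \<le> real (3*2^e)" using mb(1) by (simp only: of_nat_le_iff)
  then have "real m / 3 \<le> 2^e" by simp
  then have "log 2 (real m / 3) \<le> log 2 (2^e)" using assms(3) by (subst log_le_cancel_iff) auto
  then have "log 2 (real m / 3) \<le> real e" by (simp add: log_nat_power)
  then have "tm_delta m \<le> int e" unfolding tm_delta_def by (simp add: ceiling_le_iff)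
  then have "2 powr (real_of_int (tm_delta m)) \<le> 2 powr (real e)" by simp
  also have "\<dots> = 2^e" by (simp add: powr_realpow)
  also have "\<dots> \<le> real k - 1"
  proof -
    have "(2::nat)^e + 1 \<le> k" using mb(2) ab(2) by linarith
    then have "real ((2::nat)^e + 1) \<le> real k" by (rule of_nat_mono)
    then show ?thesis by simp
  qed
  finally show ?thesis .
qed

end
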